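(* For $\tau\in\mathbb{R}$ and integer $n\ge0$ let $$\mu_{2n}(\tau;\tfrac13)=\int_{-\infty}^{\infty}x^{2n}\exp\left\{-\left(x^6-\tau x^4+\tfrac13\tau^2x^2\right)\right\}dx.$$ Then \begin{align*} \mu_{2n}(\tau;\tfrac13)=\Bigg\{&\tfrac13\Gamma\!\left(\tfrac13n+\tfrac16\right){}_2F_2\!\left(\tfrac16-\tfrac13n,\tfrac12-\tfrac13n;\tfrac13,\tfrac23;\tfrac{\tau^3}{27}\right)+\tfrac13\tau\Gamma\!\left(\tfrac13n+\tfrac56\right){}_2F_2\!\left(\tfrac12-\tfrac13n,\tfrac56-\tfrac13n;\tfrac23,\tfrac43;\tfrac{\tau^3}{27}\right)\\ &+\frac{(2n-1)\tau^2}{36}\Gamma\!\left(\tfrac13n+\tfrac12\right){}_2F_2\!\left(\tfrac56-\tfrac13n,\tfrac76-\tfrac13n;\tfrac43,\tfrac53;\tfrac{\tau^3}{27}\right)\Bigg\}\exp\left(-\frac{\tau^3}{27}\right). \end{align*}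
   Context: ${}_2F_2(a_1,a_2;b_1,b_2;z)$ denotes the generalised hypergeometric function with upper parameters $a_1,a_2$ and lower parameters $b_1,b_2$. *)

theory Defs
  imports "HOL-Analysis.Analysis"
begin

definition hyp2F2 :: "real \<Rightarrow> real \<Rightarrow> real \<Rightarrow> real \<Rightarrow> real \<Rightarrow> real" where
  "hyp2F2 a1 a2 b1 b2 z =
     (\<Sum>k. pochhammer a1 k * pochhammer a2 k / (pochhammer b1 k * pochhammer b2 k)
            * z ^ k / fact k)"

end

theory Submission
  imports Defs "HOL-Computational_Algebra.Formal_Power_Series" "HOL-Real_Asymp.Real_Asymp"
begin

definition gg :: "nat \<Rightarrow> real \<Rightarrow> real \<Rightarrow> real \<Rightarrow> real \<Rightarrow> real" where
  "gg k a1 a2 b1 b2 = pochhammer a1 k * pochhammer a2 k / (pochhammer b1 k * pochhammer b2 k) / fact k / 27^k"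

lemma gg_0[simp]: "gg 0 a b c d = 1" by (simp add: gg_def)

lemma gg_Suc: "gg (Suc k) a1 a2 b1 b2 = gg k a1 a2 b1 b2 * ((a1 + k) * (a2 + k)) / ((b1 + k) * (b2 + k) * (k+1) * 27)"
  by (simp add: gg_def pochhammer_Suc field_simps)

lemma gg_Suc_down: "a' = a + 1 \<Longrightarrow> b' = b + 1 \<Longrightarrow> c' = c + 1 \<Longrightarrow> d' = d + 1 \<Longrightarrow> c \<noteq> 0 \<Longrightarrow> d \<noteq> 0 \<Longrightarrow>
   p = a * b \<Longrightarrow> q = c * d * (real k+1) * 27 \<Longrightarrow>
   gg (Suc k) a b c d = gg k a' b' c' d' * p / q"
  by (simp add: gg_def pochhammer_rec field_simps)

lemma gg_low_up1: "c' = c + 1 \<Longrightarrow> c > 0 \<Longrightarrow> gg k a b c' d = gg k a b c d * c / (c + k)"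
proof -
  assume "c' = c + 1" "c > 0"
  then have e: "pochhammer c' k = pochhammer c k * (c + k) / c"
    using pochhammer_rec[of c k] pochhammer_Suc[of c k] by (simp add: field_simps)
  have "pochhammer c k > 0" using \<open>c>0\<close> by (intro pochhammer_pos)
  moreover have "c + k > 0" using \<open>c>0\<close> by simp
  ultimately show ?thesis using \<open>c>0\<close>
    unfolding gg_def e by (simp add: field_simps)
qed

lemma gg_comm: "gg k a b c d = gg k a b d c" by (simp add: gg_def mult.commute)

lemma gg_up1: "a' = a + 1 \<Longrightarrow> a \<noteq> 0 \<Longrightarrow> gg k a' b c d = gg k a b c d * (a + k) / a"
proof -
  assume "a' = a + 1" "a \<noteq> 0"
  then have e: "pochhammer a' k = pochhammer a k * (a + k) / a"
    using pochhammer_rec[of a k] pochhammer_Suc[of a k] by (simp add: field_simps)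
  show ?thesis unfolding gg_def e by (simp add: field_simps)
qed

definition cc :: "nat \<Rightarrow> nat \<Rightarrow> real" where
"cc n m = (let x = real n / 3; k = m div 3 in
  if m mod 3 = 0 then Gamma (x + 1/6) / 3 * gg k (1/6 - x) (1/2 - x) (1/3) (2/3)
  else if m mod 3 = 1 then Gamma (x + 5/6) / 3 * gg k (1/2 - x) (5/6 - x) (2/3) (4/3)
  else (2 * real n - 1) / 36 * Gamma (x + 1/2) * gg k (5/6 - x) (7/6 - x) (4/3) (5/3))"

lemma cc0: "cc n (3*k) = Gamma (real n/3 + 1/6) / 3 * gg k (1/6 - real n/3) (1/2 - real n/3) (1/3) (2/3)"
  by (simp add: cc_def Let_def)
lemma cc1: "cc n (3*k+1) = Gamma (real n/3 + 5/6) / 3 * gg k (1/2 - real n/3) (5/6 - real n/3) (2/3) (4/3)"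
proof -
  have "(3*k+1) mod 3 = 1" "(3*k+1) div 3 = k" by presburger+
  then show ?thesis by (simp only: cc_def Let_def) simp
qed
lemma cc2: "cc n (3*k+2) = (2 * real n - 1) / 36 * Gamma (real n/3 + 1/2) * gg k (5/6 - real n/3) (7/6 - real n/3) (4/3) (5/3)"
proof -
  have "(3*k+2) mod 3 = 2" "(3*k+2) div 3 = k" by presburger+
  then show ?thesis by (simp only: cc_def Let_def) simp
qed

lemma low43: "gg k a b (4/3) d = gg k a b (1/3) d * (1/3) / (1/3 + k)"
  by (rule gg_low_up1) auto
lemma low53: "gg k a b (5/3) d = gg k a b (2/3) d * (2/3) / (2/3 + k)"
  by (rule gg_low_up1) auto

lemma L2343: "gg k a b (2/3) (4/3) = gg k a b (1/3) (2/3) * (1/3) / (1/3 + k)"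
  using low43[of k a b "2/3"] by (simp add: gg_comm[of k a b "2/3"])
lemma L4353: "gg k a b (4/3) (5/3) = gg k a b (1/3) (2/3) * (1/3) / (1/3 + k) * (2/3) / (2/3 + k)"
proof -
  have "gg k a b (4/3) (5/3) = gg k a b (1/3) (5/3) * (1/3) / (1/3 + k)" by (rule low43)
  also have "gg k a b (1/3) (5/3) = gg k a b (2/3) (1/3) * (2/3) / (2/3 + k)"
    using low53[of k a b "1/3"] by (simp add: gg_comm[of k a b "1/3"])
  finally show ?thesis by (simp add: gg_comm[of k a b "2/3"] field_simps)
qed

lemma caseA:
  "(real (3*Suc j) + 1) * cc n (Suc (3*Suc j)) = cc (n+2) (3*Suc j) - 2/3 * cc (n+1) (3*j+2) + 1/9 * cc n (3*j+1)"
proof -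
  define x where "x = real n / 3"
  define G where "G = Gamma (x + 5/6)"
  define B where "B = gg j (1/2 - x) (5/6 - x) (1/3) (2/3)"
  have h1: "cc n (Suc (3*Suc j)) = G/3 * (B * (1/3) / (1/3 + j) * ((1/2 - x + j) * (5/6 - x + j)) / ((2/3 + j) * (4/3 + j) * (real j+1) * 27))"
  proof -
    have "cc n (Suc (3*Suc j)) = G/3 * gg (Suc j) (1/2 - x) (5/6 - x) (2/3) (4/3)"
      using cc1[of n "Suc j"] by (simp add: x_def G_def)
    moreover have "gg j (1/2 - x) (5/6 - x) (2/3) (4/3) = B * (1/3) / (1/3 + j)"
      by (simp add: B_def L2343)
    ultimately show ?thesis by (simp add: gg_Suc)
  qed
  have h2: "cc (n+2) (3*Suc j) = G/3 * (B * (1/3) / (1/3 + j) * (2/3) / (2/3 + j) * ((-1/2 - x) * (-1/6 - x)) / ((1/3) * (2/3) * (real j+1) * 27))"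
  proof -
    have e1: "gg (Suc j) (1/6 - real (n+2)/3) (1/2 - real (n+2)/3) (1/3) (2/3) = gg j (1/2 - x) (5/6 - x) (4/3) (5/3) * ((-1/2 - x) * (-1/6 - x)) / ((1/3) * (2/3) * (real j+1) * 27)"
      by (rule gg_Suc_down) (auto simp: x_def field_simps)
    have e2: "Gamma (real (n+2)/3 + 1/6) = G" by (simp add: G_def x_def field_simps)
    have "cc (n+2) (3*Suc j) = Gamma (real (n+2)/3 + 1/6) / 3 * gg (Suc j) (1/6 - real (n+2)/3) (1/2 - real (n+2)/3) (1/3) (2/3)"
      by (rule cc0)
    also have "\<dots> = G/3 * (gg j (1/2 - x) (5/6 - x) (4/3) (5/3) * ((-1/2 - x) * (-1/6 - x)) / ((1/3) * (2/3) * (real j+1) * 27))"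
      by (simp only: e1 e2)
    also have "\<dots> = G/3 * (B * (1/3) / (1/3 + j) * (2/3) / (2/3 + j) * ((-1/2 - x) * (-1/6 - x)) / ((1/3) * (2/3) * (real j+1) * 27))"
      by (simp only: B_def L4353)
    finally show ?thesis .
  qed
  have h3: "cc (n+1) (3*j+2) = (6*x + 1) / 36 * G * (B * (1/3) / (1/3 + j) * (2/3) / (2/3 + j))"
  proof -
    have e1: "gg j (5/6 - real (n+1)/3) (7/6 - real (n+1)/3) (4/3) (5/3) = gg j (1/2 - x) (5/6 - x) (4/3) (5/3)"
      by (rule arg_cong2[where f="\<lambda>a b. gg j a b (4/3) (5/3)"]) (auto simp: x_def field_simps)
    have e2: "Gamma (real (n+1)/3 + 1/2) = G" by (simp add: G_def x_def field_simps)
    have e3: "2 * real (n+1) - 1 = 6*x+1" by (simp add: x_def)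
    have "cc (n+1) (3*j+2) = (2 * real (n+1) - 1) / 36 * Gamma (real (n+1)/3 + 1/2) * gg j (5/6 - real (n+1)/3) (7/6 - real (n+1)/3) (4/3) (5/3)"
      by (rule cc2)
    also have "\<dots> = (6*x + 1) / 36 * G * gg j (1/2 - x) (5/6 - x) (4/3) (5/3)"
      by (simp only: e1 e2 e3)
    also have "\<dots> = (6*x + 1) / 36 * G * (B * (1/3) / (1/3 + j) * (2/3) / (2/3 + j))"
      by (simp only: B_def L4353)
    finally show ?thesis .
  qed
  have h4: "cc n (3*j+1) = G/3 * (B * (1/3) / (1/3 + j))"
  proof -
    have "gg j (1/2 - x) (5/6 - x) (2/3) (4/3) = B * (1/3) / (1/3 + j)"
      by (simp add: B_def L2343)
    then show ?thesis using cc1[of n j] by (simp add: x_def G_def)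
  qed
  have nz: "1/3 + real j \<noteq> 0" "2/3 + real j \<noteq> 0" "4/3 + real j \<noteq> 0" "real j + 1 \<noteq> 0"
    "1 + 3 * real j \<noteq> 0" "2 + 3 * real j \<noteq> 0" "4 + 3 * real j \<noteq> 0"
    using of_nat_0_le_iff[of j, where 'a=real] by linarith+
  define a where "a = 1/3 + real j"
  define b where "b = 2/3 + real j"
  define c where "c = 4/3 + real j"
  define d where "d = real j + 1"
  have pos: "a > 0" "b > 0" "c > 0" "d > 0" unfolding a_def b_def c_def d_def
    using of_nat_0_le_iff[of j, where 'a=real] by linarith+
  have c3: "real (3*Suc j) + 1 = 3*c" unfolding c_def by simp
  have e1: "(real (3*Suc j) + 1) * cc n (Suc (3*Suc j)) = G*B*((1/2 - x + j) * (5/6 - x + j)) / (81*(a*b*d))"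
    unfolding c3 h1 a_def[symmetric] b_def[symmetric] c_def[symmetric] d_def[symmetric]
    using pos by (simp add: field_simps)
  have e2: "cc (n+2) (3*Suc j) = G*B*((-1/2 - x) * (-1/6 - x)) / (81*(a*b*d))"
    unfolding h2 a_def[symmetric] b_def[symmetric] c_def[symmetric] d_def[symmetric]
    using pos by (simp add: field_simps)
  have e3: "2/3 * cc (n+1) (3*j+2) = G*B*((6*x+1)*d/3) / (81*(a*b*d))"
    unfolding h3 a_def[symmetric] b_def[symmetric] c_def[symmetric] d_def[symmetric]
    using pos by (simp add: field_simps)
  have e4: "1/9 * cc n (3*j+1) = G*B*(b*d) / (81*(a*b*d))"
    unfolding h4 a_def[symmetric] b_def[symmetric] c_def[symmetric] d_def[symmetric]
    using pos by (simp add: field_simps)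
  have poly: "(1/2 - x + j) * (5/6 - x + j) = (-1/2 - x) * (-1/6 - x) - (6*x+1)*d/3 + b*d"
    unfolding b_def d_def by (simp add: field_simps)
  show ?thesis unfolding e1 e2 e3 e4 poly
    by (simp add: diff_divide_distrib add_divide_distrib algebra_simps)
qed

lemma Gamma_p1: "z > 0 \<Longrightarrow> Gamma (z + 1) = z * Gamma (z::real)"
  by (rule Gamma_plus1) (auto dest: nonpos_Ints_nonpos)

lemma caseA0: "(real 0 + 1) * cc n (Suc 0) = cc (n+2) 0"
  using cc1[of n 0] cc0[of "n+2" 0] by (simp add: field_simps)

lemma caseC:
  "(real (3*k+2) + 1) * cc n (Suc (3*k+2)) = cc (n+2) (3*k+2) - 2/3 * cc (n+1) (3*k+1) + 1/9 * cc n (3*k)"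
proof -
  define x where "x = real n / 3"
  define G where "G = Gamma (x + 1/6)"
  define w where "w = 1/6 - x"
  define B where "B = gg k w (w+1/3) (1/3) (2/3)"
  define a where "a = 1/3 + real k"
  define b where "b = 2/3 + real k"
  define d where "d = real k + 1"
  have pos: "a > 0" "b > 0" "d > 0" unfolding a_def b_def d_def
    using of_nat_0_le_iff[of k, where 'a=real] by linarith+
  have xpos: "x \<ge> 0" unfolding x_def by simp
  have h1: "cc n (Suc (3*k+2)) = G/3 * (B * ((w + k) * (w + 1/3 + k)) / (a * b * d * 27))"
  proof -
    have i: "Suc (3*k+2) = 3 * Suc k" by simp
    have "cc n (Suc (3*k+2)) = G/3 * gg (Suc k) w (w+1/3) (1/3) (2/3)"
      unfolding i cc0 by (simp add: x_def G_def w_def)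
    then show ?thesis by (simp add: gg_Suc B_def a_def b_def d_def)
  qed
  have h2: "cc (n+2) (3*k+2) = (6*x+3)/36 * ((x + 1/6) * G) * (B * (1/3) / a * (2/3) / b)"
  proof -
    have e1: "gg k (5/6 - real (n+2)/3) (7/6 - real (n+2)/3) (4/3) (5/3) = gg k w (w+1/3) (4/3) (5/3)"
      by (rule arg_cong2[where f="\<lambda>a b. gg k a b (4/3) (5/3)"]) (auto simp: x_def w_def field_simps)
    have e2: "Gamma (real (n+2)/3 + 1/2) = (x + 1/6) * G"
    proof -
      have "real (n+2)/3 + 1/2 = (x + 1/6) + 1" by (simp add: x_def field_simps)
      then show ?thesis using Gamma_p1[of "x + 1/6"] xpos by (simp add: G_def)
    qed
    have e3: "2 * real (n+2) - 1 = 6*x+3" by (simp add: x_def)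
    have "cc (n+2) (3*k+2) = (2 * real (n+2) - 1) / 36 * Gamma (real (n+2)/3 + 1/2) * gg k (5/6 - real (n+2)/3) (7/6 - real (n+2)/3) (4/3) (5/3)"
      by (rule cc2)
    also have "\<dots> = (6*x+3)/36 * ((x + 1/6) * G) * gg k w (w+1/3) (4/3) (5/3)"
      by (simp only: e1 e2 e3)
    also have "\<dots> = (6*x+3)/36 * ((x + 1/6) * G) * (B * (1/3) / a * (2/3) / b)"
      by (simp only: B_def L4353 a_def b_def)
    finally show ?thesis .
  qed
  have h3: "cc (n+1) (3*k+1) = ((x + 1/6) * G) / 3 * (B * (1/3) / a)"
  proof -
    have e1: "gg k (1/2 - real (n+1)/3) (5/6 - real (n+1)/3) (2/3) (4/3) = gg k w (w+1/3) (2/3) (4/3)"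
      by (rule arg_cong2[where f="\<lambda>a b. gg k a b (2/3) (4/3)"]) (auto simp: x_def w_def field_simps)
    have e2: "Gamma (real (n+1)/3 + 5/6) = (x + 1/6) * G"
    proof -
      have "real (n+1)/3 + 5/6 = (x + 1/6) + 1" by (simp add: x_def field_simps)
      then show ?thesis using Gamma_p1[of "x + 1/6"] xpos by (simp add: G_def)
    qed
    have "cc (n+1) (3*k+1) = Gamma (real (n+1)/3 + 5/6) / 3 * gg k (1/2 - real (n+1)/3) (5/6 - real (n+1)/3) (2/3) (4/3)"
      by (rule cc1)
    also have "\<dots> = ((x + 1/6) * G) / 3 * gg k w (w+1/3) (2/3) (4/3)"
      by (simp only: e1 e2)
    also have "\<dots> = ((x + 1/6) * G) / 3 * (B * (1/3) / a)"
      by (simp only: B_def L2343 a_def)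
    finally show ?thesis .
  qed
  have h4: "cc n (3*k) = G/3 * B"
    using cc0[of n k] by (simp add: x_def G_def w_def B_def)
  have c3: "real (3*k+2) + 1 = 3*d" unfolding d_def by simp
  have e1: "(real (3*k+2) + 1) * cc n (Suc (3*k+2)) = G*B*((w + k) * (w + 1/3 + k)) / (27*(a*b))"
    unfolding c3 h1 using pos by (simp add: field_simps)
  have e2: "cc (n+2) (3*k+2) = G*B*((6*x+3)*(x+1/6)*2) / (36*9*(a*b))"
    unfolding h2 using pos by (simp add: field_simps)
  have e3: "2/3 * cc (n+1) (3*k+1) = G*B*(2*(x+1/6)*b) / (27*(a*b))"
    unfolding h3 using pos by (simp add: field_simps)
  have e4: "1/9 * cc n (3*k) = G*B*(a*b) / (27*(a*b))"
    unfolding h4 using pos by (simp add: field_simps)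
  have poly: "(w + k) * (w + 1/3 + k) = (6*x+3)*(x+1/6)*2/12 - 2*(x+1/6)*b + a*b"
    unfolding a_def b_def w_def by (simp add: field_simps)
  show ?thesis unfolding e1 e2 e3 e4 poly
    by (simp add: diff_divide_distrib add_divide_distrib algebra_simps)
qed

lemma gg_up2: "b' = b + 1 \<Longrightarrow> b \<noteq> 0 \<Longrightarrow> gg k a b' c d = gg k a b c d * (b + k) / b"
proof -
  assume "b' = b + 1" "b \<noteq> 0"
  then have e: "pochhammer b' k = pochhammer b k * (b + k) / b"
    using pochhammer_rec[of b k] pochhammer_Suc[of b k] by (simp add: field_simps)
  show ?thesis unfolding gg_def e by (simp add: field_simps)
qed

lemma caseB0: "(real (3*0+1) + 1) * cc n (Suc (3*0+1)) = cc (n+2) (3*0+1) - 2/3 * cc (n+1) (3*0)"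
proof -
  define x where "x = real n / 3"
  define G where "G = Gamma (x + 1/2)"
  have xpos: "x \<ge> 0" unfolding x_def by simp
  have "cc n 2 = (6*x-1)/36 * G" using cc2[of n 0] by (simp add: x_def G_def numeral_2_eq_2)
  moreover have "cc (n+2) 1 = (x+1/2)*G/3"
  proof -
    have "real (n+2)/3 + 5/6 = (x + 1/2) + 1" by (simp add: x_def field_simps)
    then show ?thesis using cc1[of "n+2" 0] Gamma_p1[of "x + 1/2"] xpos by (simp add: G_def)
  qed
  moreover have "cc (n+1) 0 = G/3"
  proof -
    have "real (n+1)/3 + 1/6 = x + 1/2" by (simp add: x_def field_simps)
    then show ?thesis using cc0[of "n+1" 0] by (simp add: G_def)
  qed
  ultimately show ?thesis by (simp add: field_simps numeral_eq_Suc)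
qed

lemma caseB:
  "(real (3*Suc j+1) + 1) * cc n (Suc (3*Suc j+1)) = cc (n+2) (3*Suc j+1) - 2/3 * cc (n+1) (3*Suc j) + 1/9 * cc n (3*j+2)"
proof -
  define k where "k = Suc j"
  define x where "x = real n / 3"
  define G where "G = Gamma (x + 1/2)"
  define v where "v = -1/6 - x"
  define B where "B = gg k v (v+1/3) (1/3) (2/3)"
  define a where "a = 1/3 + real k"
  define b where "b = 2/3 + real k"
  define V where "V = v * (v + 1/3)"
  have pos: "a > 0" "b > 0" unfolding a_def b_def
    using of_nat_0_le_iff[of k, where 'a=real] by linarith+
  have xpos: "x \<ge> 0" unfolding x_def by simp
  have vnz: "v \<noteq> 0" unfolding v_def using xpos by linarith
  have v3nz: "v + 1/3 \<noteq> 0"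
  proof (cases n)
    case 0 then show ?thesis by (simp add: v_def x_def)
  next
    case (Suc m) then have "real n \<ge> 1" by simp
    then show ?thesis by (simp add: v_def x_def)
  qed
  have Vnz: "V \<noteq> 0" unfolding V_def using vnz v3nz by simp
  have h1: "cc n (Suc (3*k+1)) = (6*x-1)/36 * G * (B * (1/3) / a * (2/3) / b * ((v + k) * (v + 1/3 + k) / V))"
  proof -
    have i: "Suc (3*k+1) = 3*k+2" by simp
    have e1: "gg k (5/6 - x) (7/6 - x) (4/3) (5/3) = gg k v (v+1/3) (4/3) (5/3) * ((v + k) / v) * ((v + 1/3 + k) / (v + 1/3))"
    proof -
      have "gg k (5/6 - x) (7/6 - x) (4/3) (5/3) = gg k v (7/6 - x) (4/3) (5/3) * (v + k) / v"
        by (rule gg_up1) (use vnz in \<open>auto simp: v_def\<close>)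
      also have "gg k v (7/6 - x) (4/3) (5/3) = gg k v (v+1/3) (4/3) (5/3) * (v + 1/3 + k) / (v + 1/3)"
        by (rule gg_up2) (use v3nz in \<open>auto simp: v_def\<close>)
      finally show ?thesis by (simp add: ac_simps)
    qed
    have e2: "((v + k) / v) * ((v + 1/3 + k) / (v + 1/3)) = (v + k) * (v + 1/3 + k) / V"
      unfolding V_def by simp
    show ?thesis unfolding i cc2 e1[unfolded x_def] B_def a_def b_def L4353[of k v "v+1/3"] mult.assoc e2
      by (simp add: x_def G_def)
  qed
  have h2: "cc (n+2) (3*k+1) = ((x + 1/2) * G) / 3 * (B * (1/3) / a)"
  proof -
    have e1: "gg k (1/2 - real (n+2)/3) (5/6 - real (n+2)/3) (2/3) (4/3) = gg k v (v+1/3) (2/3) (4/3)"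
      by (rule arg_cong2[where f="\<lambda>a b. gg k a b (2/3) (4/3)"]) (auto simp: x_def v_def field_simps)
    have e2: "Gamma (real (n+2)/3 + 5/6) = (x + 1/2) * G"
    proof -
      have "real (n+2)/3 + 5/6 = (x + 1/2) + 1" by (simp add: x_def field_simps)
      then show ?thesis using Gamma_p1[of "x + 1/2"] xpos by (simp add: G_def)
    qed
    have "cc (n+2) (3*k+1) = Gamma (real (n+2)/3 + 5/6) / 3 * gg k (1/2 - real (n+2)/3) (5/6 - real (n+2)/3) (2/3) (4/3)"
      by (rule cc1)
    also have "\<dots> = ((x + 1/2) * G) / 3 * gg k v (v+1/3) (2/3) (4/3)"
      by (simp only: e1 e2)
    also have "\<dots> = ((x + 1/2) * G) / 3 * (B * (1/3) / a)"
      by (simp only: B_def L2343 a_def)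
    finally show ?thesis .
  qed
  have h3: "cc (n+1) (3*k) = G / 3 * B"
  proof -
    have e1: "gg k (1/6 - real (n+1)/3) (1/2 - real (n+1)/3) (1/3) (2/3) = gg k v (v+1/3) (1/3) (2/3)"
      by (rule arg_cong2[where f="\<lambda>a b. gg k a b (1/3) (2/3)"]) (auto simp: x_def v_def field_simps)
    have e2: "Gamma (real (n+1)/3 + 1/6) = G" by (simp add: G_def x_def field_simps)
    show ?thesis unfolding cc0 e1 e2 B_def by simp
  qed
  have h4: "cc n (3*j+2) = (6*x-1)/36 * G * (B * (6 * real k) / V)"
  proof -
    have "B = gg j (5/6 - x) (7/6 - x) (4/3) (5/3) * V / ((1/3) * (2/3) * (real j + 1) * 27)"
      unfolding B_def V_def k_def by (rule gg_Suc_down) (auto simp: v_def)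
    then have "gg j (5/6 - x) (7/6 - x) (4/3) (5/3) = B * (6 * real k) / V"
      using Vnz unfolding k_def by (simp add: field_simps)
    then show ?thesis unfolding cc2 by (simp add: x_def G_def)
  qed
  have c3: "real (3*k+1) + 1 = 3*b" unfolding b_def by simp
  have e1: "(real (3*k+1) + 1) * cc n (Suc (3*k+1)) = G*B*((6*x-1)*(2/3)*((v + k) * (v + 1/3 + k))) / (36*(a*V))"
    unfolding c3 h1 using pos Vnz by (simp add: field_simps)
  have e2: "cc (n+2) (3*k+1) = G*B*(4*(x+1/2)*V) / (36*(a*V))"
    unfolding h2 using pos Vnz by (simp add: field_simps)
  have e3: "2/3 * cc (n+1) (3*k) = G*B*(8*a*V) / (36*(a*V))"
    unfolding h3 using pos Vnz by (simp add: field_simps)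
  have e4: "1/9 * cc n (3*j+2) = G*B*((2/3)*(6*x-1)*k*a) / (36*(a*V))"
    unfolding h4 using pos Vnz by (simp add: field_simps)
  have poly: "(6*x-1)*(2/3)*((v + k) * (v + 1/3 + k)) = 4*(x+1/2)*V - 8*a*V + (2/3)*(6*x-1)*k*a"
    unfolding a_def V_def v_def by (simp add: field_simps)
  show ?thesis unfolding k_def[symmetric] e1 e2 e3 e4 poly
    by (simp add: diff_divide_distrib add_divide_distrib algebra_simps)
qed

lemma cc_rec: "(real m + 1) * cc n (Suc m) = cc (n+2) m - 2/3 * (if m = 0 then 0 else cc (n+1) (m - 1)) + 1/9 * (if m < 2 then 0 else cc n (m - 2))"
proof -
  obtain k r where m: "m = 3*k + r" and r: "r < 3" using div_mod_decomp[of m 3] by (metis mod_less_divisor zero_less_numeral mult.commute)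
  consider "r = 0" | "r = 1" | "r = 2" using r by linarith
  then show ?thesis
  proof cases
    case 1
    show ?thesis
    proof (cases k)
      case 0
      then have m': "m = 0" using m 1 by simp
      show ?thesis unfolding m' using caseA0[of n] by simp
    next
      case (Suc j)
      have m': "m = 3*Suc j" using m 1 Suc by simp
      have i1: "(if m = 0 then 0 else cc (n+1) (m - 1)) = cc (n+1) (3*j+2)" unfolding m' by simp
      have i2: "(if m < 2 then 0 else cc n (m - 2)) = cc n (3*j+1)" unfolding m' by simp
      show ?thesis unfolding i1 i2 unfolding m' by (rule caseA)
    qed
  next
    case 2
    show ?thesis
    proof (cases k)
      case 0
      then have m': "m = 3*0+1" using m 2 by simp
      have i1: "(if m = 0 then 0 else cc (n+1) (m - 1)) = cc (n+1) (3*0)" unfolding m' by simp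
      have i2: "(if m < 2 then 0 else cc n (m - 2)) = 0" unfolding m' by simp
      show ?thesis unfolding i1 i2 using caseB0[of n] unfolding m' by simp
    next
      case (Suc j)
      have m': "m = 3*Suc j+1" using m 2 Suc by simp
      have i1: "(if m = 0 then 0 else cc (n+1) (m - 1)) = cc (n+1) (3*Suc j)" unfolding m' by simp
      have i2: "(if m < 2 then 0 else cc n (m - 2)) = cc n (3*j+2)" unfolding m' by simp
      show ?thesis unfolding i1 i2 unfolding m' by (rule caseB)
    qed
  next
    case 3
    have m': "m = 3*k+2" using m 3 by simp
    have i1: "(if m = 0 then 0 else cc (n+1) (m - 1)) = cc (n+1) (3*k+1)" unfolding m' by simp
    have i2: "(if m < 2 then 0 else cc n (m - 2)) = cc n (3*k)" unfolding m' by simp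
    show ?thesis unfolding i1 i2 unfolding m' by (rule caseC)
  qed
qed

definition Rf :: "nat \<Rightarrow> real fps" where "Rf n = Abs_fps (cc n)"
definition Ef :: "real fps" where "Ef = Abs_fps (\<lambda>m. if 3 dvd m then (-1/27)^(m div 3) / fact (m div 3) else 0)"

lemma Rf_deriv: "fps_deriv (Rf n) = Rf (n+2) - fps_const (2/3) * (fps_X * Rf (n+1)) + fps_const (1/9) * (fps_X^2 * Rf n)"
proof (rule fps_ext)
  fix m
  show "fps_nth (fps_deriv (Rf n)) m = fps_nth (Rf (n+2) - fps_const (2/3) * (fps_X * Rf (n+1)) + fps_const (1/9) * (fps_X^2 * Rf n)) m"
  proof -
    have l: "fps_nth (fps_deriv (Rf n)) m = (real m + 1) * cc n (Suc m)" by (simp add: Rf_def)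
    have r: "fps_nth (Rf (n+2) - fps_const (2/3) * (fps_X * Rf (n+1)) + fps_const (1/9) * (fps_X^2 * Rf n)) m
       = cc (n+2) m - 2/3 * (if m = 0 then 0 else cc (n+1) (m - 1)) + 1/9 * (if m < 2 then 0 else cc n (m - 2))"
      by (simp add: Rf_def fps_X_power_mult_nth)
    show ?thesis unfolding l r by (rule cc_rec)
  qed
qed

lemma Ef_deriv: "fps_deriv Ef = - fps_const (1/9) * (fps_X^2 * Ef)"
proof (rule fps_ext)
  fix m
  show "fps_nth (fps_deriv Ef) m = fps_nth (- fps_const (1/9) * (fps_X^2 * Ef)) m"
  proof (cases "3 dvd Suc m")
    case True
    then obtain k where k: "Suc m = 3 * Suc k" by (metis dvd_def mult_0_right nat.distinct(1) not0_implies_Suc)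
    then have m: "m = 3*k + 2" by simp
    have d: "3 dvd Suc m" "Suc m div 3 = Suc k" unfolding k by simp_all
    have l: "fps_nth (fps_deriv Ef) m = real (Suc m) * ((-1/27)^(Suc k) / fact (Suc k))"
      unfolding fps_deriv_nth Ef_def fps_nth_Abs_fps Suc_eq_plus1[symmetric] using d by (simp only: if_True)
    have r: "fps_nth (- fps_const (1/9) * (fps_X^2 * Ef)) m = - (1/9) * ((-1/27)^k / fact k)"
    proof -
      have "\<not> m < 2" "m - 2 = 3*k" using m by auto
      then show ?thesis by (simp add: Ef_def fps_X_power_mult_nth)
    qed
    have p: "(fact k :: real) > 0" "(1::real) + real k > 0" by simp_all
    show ?thesis unfolding l r k using p by (simp add: field_simps del: of_nat_Suc) (simp add: algebra_simps)
  next
    case False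
    then have "\<not> (m \<ge> 2 \<and> 3 dvd (m - 2))" by presburger
    then show ?thesis using False by (auto simp: Ef_def fps_X_power_mult_nth)
  qed
qed

definition Psi :: "nat \<Rightarrow> real fps" where "Psi n = Ef * Rf n"

lemma Psi_deriv: "fps_deriv (Psi n) = Psi (n+2) - fps_const (2/3) * (fps_X * Psi (n+1))"
proof -
  have alg: "e * (r2 - c1 * (X * r1) + c2 * (X^2 * r0)) + - c2 * (X^2 * e) * r0 = e * r2 - c1 * (X * (e * r1))"
    for e r0 r1 r2 c1 c2 X :: "real fps" by (simp add: algebra_simps)
  show ?thesis unfolding Psi_def fps_deriv_mult Ef_deriv Rf_deriv by (rule alg)
qed

lemma fps_family_unique:
  fixes F H :: "nat \<Rightarrow> real fps"
  assumes F: "\<And>n. fps_deriv (F n) = F (n+2) - fps_const c * (fps_X * F (n+1))"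
      and H: "\<And>n. fps_deriv (H n) = H (n+2) - fps_const c * (fps_X * H (n+1))"
      and z: "\<And>n. fps_nth (F n) 0 = fps_nth (H n) 0"
  shows "F n = H n"
proof -
  have "\<forall>n. fps_nth (F n) p = fps_nth (H n) p" for p
  proof (induction p rule: less_induct)
    case (less p)
    show ?case
    proof (cases p)
      case 0 then show ?thesis using z by simp
    next
      case (Suc q)
      show ?thesis
      proof
        fix n
        have eF: "fps_nth (fps_deriv (F n)) q = fps_nth (F (n+2)) q - c * (if q = 0 then 0 else fps_nth (F (n+1)) (q - 1))"
          unfolding F by simp
        have eH: "fps_nth (fps_deriv (H n)) q = fps_nth (H (n+2)) q - c * (if q = 0 then 0 else fps_nth (H (n+1)) (q - 1))"
          unfolding H by simp
        have i1: "fps_nth (F (n+2)) q = fps_nth (H (n+2)) q" using less Suc by simp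
        have i2: "q \<noteq> 0 \<Longrightarrow> fps_nth (F (n+1)) (q - 1) = fps_nth (H (n+1)) (q - 1)" using less Suc by simp
        have "fps_nth (fps_deriv (F n)) q = fps_nth (fps_deriv (H n)) q"
          unfolding eF eH i1 using i2 by simp
        then show "fps_nth (F n) p = fps_nth (H n) p" using Suc by (simp del: of_nat_Suc)
      qed
    qed
  qed
  then show ?thesis by (simp add: fps_ext)
qed


lemma gamma_set_integrable:
  assumes s: "s > (0::real)"
  shows "set_integrable lborel {0<..} (\<lambda>t. t powr (s - 1) / exp t)"
proof -
  have "(\<lambda>t. t powr (s - 1) / exp t) integrable_on {0..}"
    using Gamma_integral_real[OF s] by blast
  then have "(\<lambda>t. t powr (s - 1) / exp t) absolutely_integrable_on {0..}"
    by (rule nonnegative_absolutely_integrable_1) simp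
  then have "set_integrable lborel {0..} (\<lambda>t. t powr (s - 1) / exp t)"
    unfolding set_integrable_def
    by (subst (asm) integrable_completion) (auto intro!: borel_measurable_continuous_on_indicator continuous_intros)
  then show ?thesis by (rule set_integrable_subset) auto
qed

lemma half_gamma:
  fixes c :: real and m :: nat
  assumes c: "c > 0"
  shows "set_integrable lborel {0<..} (\<lambda>x. x^(2*m) * exp (- c * x^6))"
    "(LBINT x=0..\<infinity>. x^(2*m) * exp (- c * x^6)) = Gamma ((2*real m + 1)/6) * c powr (- ((2*real m + 1)/6)) / 6"
proof -
  define s where "s = (2*real m + 1)/6"
  define k where "k = c powr (-1/6)"
  have k: "k > 0" unfolding k_def using c by simp
  have k6: "c * k^6 = 1"
  proof -
    have "k^6 = c powr (real 6 * (-1/6))" unfolding k_def using c by (subst powr_power) auto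
    then show ?thesis using c by (simp add: powr_minus field_simps)
  qed
  define f where "f = (\<lambda>x::real. x^(2*m) * exp (- c * x^6))"
  define g where "g = (\<lambda>t::real. k * t powr (1/6))"
  define g' where "g' = (\<lambda>t::real. k / 6 * t powr (-5/6))"
  have fg: "f (g t) * g' t = c powr (- s) / 6 * (t powr (s - 1) / exp t)" if t: "t > 0" for t
  proof -
    have "(t powr (1/6))^(2*m) = t powr (real (2*m) * (1/6))" using t by (subst powr_power) auto
    moreover have "(t powr (1/6))^6 = t" using t by (subst powr_power) auto
    moreover have "k^(2*m+1) = c powr (-s)"
      unfolding k_def s_def using c by (subst powr_power) (auto simp: field_simps)
    ultimately have "f (g t) * g' t = k^(2*m+1) / 6 * (t powr (real m / 3) * t powr (-5/6)) * exp (- (c * k^6) * t)"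
      unfolding f_def g_def g'_def by (simp add: power_mult_distrib field_simps)
    also have "t powr (real m / 3) * t powr (-5/6) = t powr (s - 1)"
      unfolding s_def by (simp add: powr_add[symmetric] field_simps)
    finally show ?thesis using k6 \<open>k^(2*m+1) = c powr (-s)\<close> by (simp add: exp_minus field_simps)
  qed
  have s: "s > 0" unfolding s_def by simp
  have int_fg: "set_integrable lborel (einterval 0 \<infinity>) (\<lambda>t. f (g t) * g' t)"
  proof -
    have "set_integrable lborel {0<..} (\<lambda>t. c powr (- s) / 6 * (t powr (s - 1) / exp t))"
      by (rule set_integrable_mult_right) (rule gamma_set_integrable[OF s])
    then show ?thesis
      by (subst set_integrable_cong[OF refl _ fg]) (auto simp: einterval_def)
  qed
  have deriv: "DERIV g t :> g' t" if "0 < t" for t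
    unfolding g_def g'_def using that
    by (auto intro!: derivative_eq_intros simp: field_simps)
  have contf: "isCont f x" for x unfolding f_def by (intro continuous_intros)
  have contg': "isCont g' t" if "0 < t" for t
    unfolding g'_def using that by (intro continuous_intros) auto
  have A: "((ereal \<circ> g \<circ> real_of_ereal) \<longlongrightarrow> 0) (at_right 0)"
  proof -
    have "(g \<longlongrightarrow> 0) (at_right 0)" unfolding g_def using k by real_asymp
    then show ?thesis by (simp add: ereal_tendsto_simps zero_ereal_def)
  qed
  have B: "((ereal \<circ> g \<circ> real_of_ereal) \<longlongrightarrow> \<infinity>) (at_left \<infinity>)"
  proof -
    have "filterlim g at_top at_top" unfolding g_def using k by real_asymp
    then show ?thesis by (simp add: ereal_tendsto_simps)
  qed
  have r: "set_integrable lborel (einterval 0 \<infinity>) f"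
      "(LBINT x=0..\<infinity>. f x) = (LBINT x=0..\<infinity>. (f (g x) * g' x))"
    by (rule interval_integral_substitution_nonneg[OF _ deriv contf contg' _ _ A B int_fg];
        auto simp: f_def g'_def k less_imp_le)+
  show "set_integrable lborel {0<..} (\<lambda>x. x^(2*m) * exp (- c * x^6))"
    using r(1) by (simp add: f_def einterval_def greaterThan_def)
  have "(LBINT x=0..\<infinity>. (f (g x) * g' x)) = (LBINT x=0..\<infinity>. c powr (- s) / 6 * (x powr (s - 1) / exp x))"
    by (rule interval_integral_cong) (auto simp: fg einterval_def)
  also have "\<dots> = c powr (- s) / 6 * Gamma s"
  proof -
    have "(LBINT x=0..\<infinity>. (x powr (s - 1) / exp x)) = Gamma s"
    proof -
      have "(LBINT x=0..\<infinity>. (x powr (s - 1) / exp x)) = integral {0<..} (\<lambda>x. x powr (s - 1) / exp x)"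
      proof -
        have eqset: "einterval 0 \<infinity> = {0<..}" by (auto simp: einterval_def)
        show ?thesis
          using interval_integral_eq_integral'[of 0 \<infinity> "\<lambda>x. x powr (s - 1) / exp x"] gamma_set_integrable[OF s]
          unfolding eqset by simp
      qed
      also have "\<dots> = Gamma s"
      proof -
        have "((\<lambda>x. x powr (s - 1) / exp x) has_integral Gamma s) {0<..}"
        proof -
          have "((\<lambda>t. if t \<in> {0<..} then t powr (s - 1) / exp t else 0) has_integral Gamma s) {0..}"
            by (rule has_integral_spike [of "{0}", rotated 2, OF Gamma_integral_real[OF s]]) auto
          also have "?this = ?thesis"
            by (subst has_integral_restrict) auto
          finally show ?thesis .
        qed
        then show ?thesis by (rule integral_unique)
      qed
      finally show ?thesis .
    qed
    then show ?thesis by (simp only: interval_lebesgue_integral_mult_right)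
  qed
  finally show "(LBINT x=0..\<infinity>. x^(2*m) * exp (- c * x^6)) = Gamma ((2*real m + 1)/6) * c powr (- ((2*real m + 1)/6)) / 6"
    using r(2) by (simp add: f_def s_def)
qed

lemma gamma6:
  fixes c :: real and m :: nat
  assumes c: "c > 0"
  shows "((\<lambda>x. x^(2*m) * exp (- c * x^6)) has_integral (Gamma ((2*real m + 1)/6) * c powr (- ((2*real m + 1)/6)) / 3)) UNIV"
proof -
  define f where "f = (\<lambda>x::real. x^(2*m) * exp (- c * x^6))"
  define I where "I = Gamma ((2*real m + 1)/6) * c powr (- ((2*real m + 1)/6)) / 6"
  have si: "set_integrable lborel {0<..} f" and li: "(LBINT x=0..\<infinity>. f x) = I"
    using half_gamma[OF c, of m] unfolding f_def I_def by auto
  have pos_abs: "f absolutely_integrable_on {0<..}"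
    using si unfolding set_integrable_def
    by (subst integrable_completion) (auto intro!: borel_measurable_continuous_on_indicator continuous_intros simp: f_def)
  have pos_int: "integral {0<..} f = I"
    using li set_borel_integral_eq_integral(2)[OF si] interval_lebesgue_integral_0_infty(2)[of lborel f] by simp
  have pos: "(f has_integral I) {0<..}"
    using pos_int set_lebesgue_integral_eq_integral(1)[OF pos_abs] by (metis has_integral_integral)
  have ev: "f (- x) = f x" for x unfolding f_def by simp
  have cv: "(\<lambda>x. \<bar>-1\<bar> * f (uminus x)) absolutely_integrable_on {..<0} \<and> integral {..<0} (\<lambda>x. \<bar>-1\<bar> * f (uminus x)) = I
     \<longleftrightarrow> f absolutely_integrable_on (uminus ` {..<0}) \<and> integral (uminus ` {..<0}) f = I"
    by (rule has_absolute_integral_change_of_variables_1') (auto intro!: derivative_eq_intros)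
  have img: "uminus ` {..<0::real} = {0<..}"
    by (auto simp: image_iff intro!: exI[of _ "- x" for x])
  have "f absolutely_integrable_on {..<0} \<and> integral {..<0} f = I"
    using cv pos_abs pos_int unfolding img ev by simp
  then have neg: "(f has_integral I) {..<0}"
    using set_lebesgue_integral_eq_integral(1) by (metis has_integral_integral)
  have un: "(f has_integral (I + I)) ({..<0} \<union> {0<..})"
  proof (rule has_integral_Un[OF neg pos])
    have "{..<0} \<inter> {0<..} = ({}::real set)" by auto
    then show "negligible ({..<0} \<inter> {0<..} :: real set)" by simp
  qed
  have "(f has_integral (I + I)) UNIV"
  proof (subst has_integral_spike_set_eq[where S=UNIV and T="{..<0} \<union> {0<..}"])
    show "negligible {x \<in> UNIV - ({..<0} \<union> {0<..}). f x \<noteq> 0}"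
      by (rule negligible_subset[of "{0}"]) auto
  qed (use un in auto)
  then show ?thesis unfolding f_def I_def by (simp add: field_simps)
qed


lemma sums_reindex_mult:
  fixes f :: "nat \<Rightarrow> real"
  assumes k: "0 < k" and r: "r < k" and s: "(\<lambda>l. f (k*l + r)) sums s"
    and z: "\<And>m. m mod k \<noteq> r \<Longrightarrow> f m = 0"
  shows "f sums s"
proof -
  have sm: "strict_mono (\<lambda>l. k*l + r)" using k by (auto simp: strict_mono_def)
  have "f m = 0" if "m \<notin> range (\<lambda>l. k*l + r)" for m
  proof (rule z)
    show "m mod k \<noteq> r"
    proof
      assume "m mod k = r"
      then have "m = k * (m div k) + r" using mult_div_mod_eq[of k m] by simp
      then show False using that by auto
    qed
  qed
  then show ?thesis using sums_mono_reindex[OF sm, of f s] s by blast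
qed

lemma sums_split3:
  fixes f :: "nat \<Rightarrow> real"
  assumes "(\<lambda>k. f (3*k)) sums a" "(\<lambda>k. f (3*k+1)) sums b" "(\<lambda>k. f (3*k+2)) sums c"
  shows "f sums (a + b + c)"
proof -
  define g where "g = (\<lambda>r m. if m mod 3 = r then f m else 0)"
  have "g r sums s" if "r < 3" "(\<lambda>k. f (3*k+r)) sums s" for r s
    by (rule sums_reindex_mult[of 3 r]) (use that in \<open>auto simp: g_def\<close>)
  then have "g 0 sums a" "g 1 sums b" "g 2 sums c" using assms by auto
  then have "(\<lambda>m. g 0 m + g 1 m + g 2 m) sums (a + b + c)" by (intro sums_add)
  moreover have "g 0 m + g 1 m + g 2 m = f m" for m
  proof -
    have "m mod 3 = 0 \<or> m mod 3 = 1 \<or> m mod 3 = 2" by arith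
    then show ?thesis by (auto simp: g_def)
  qed
  ultimately show ?thesis by simp
qed

definition hterm :: "real \<Rightarrow> real \<Rightarrow> real \<Rightarrow> real \<Rightarrow> real \<Rightarrow> nat \<Rightarrow> real" where
  "hterm a1 a2 b1 b2 z k = pochhammer a1 k * pochhammer a2 k / (pochhammer b1 k * pochhammer b2 k) * z ^ k / fact k"

lemma hyp2F2_hterm: "hyp2F2 a1 a2 b1 b2 z = (\<Sum>k. hterm a1 a2 b1 b2 z k)"
  unfolding hyp2F2_def hterm_def ..

lemma hterm_Suc:
  assumes "b1 > 0" "b2 > 0"
  shows "hterm a1 a2 b1 b2 z (Suc k) = hterm a1 a2 b1 b2 z k * ((a1 + k) * (a2 + k) * z / ((b1 + k) * (b2 + k) * (real k + 1)))"
proof -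
  have "pochhammer b1 k > 0" "pochhammer b2 k > 0" using assms by (auto intro: pochhammer_pos)
  moreover have "b1 + k > 0" "b2 + k > 0" using assms by auto
  ultimately show ?thesis unfolding hterm_def by (simp add: pochhammer_Suc field_simps)
qed

lemma hterm_abs_summable:
  assumes b: "b1 > 0" "b2 > 0"
  shows "summable (\<lambda>k. norm (hterm a1 a2 b1 b2 z k))"
proof (rule summable_ratio_test[of "1/2" "nat \<lceil>max (max \<bar>a1\<bar> \<bar>a2\<bar>) (8 * \<bar>z\<bar>)\<rceil>"])
  fix k assume k: "k \<ge> nat \<lceil>max (max \<bar>a1\<bar> \<bar>a2\<bar>) (8 * \<bar>z\<bar>)\<rceil>"
  have "max (max \<bar>a1\<bar> \<bar>a2\<bar>) (8 * \<bar>z\<bar>) \<le> real k"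
    using real_nat_ceiling_ge[of "max (max \<bar>a1\<bar> \<bar>a2\<bar>) (8 * \<bar>z\<bar>)"] k
    by (meson of_nat_le_iff order_trans)
  then have k1: "real k \<ge> \<bar>a1\<bar>" "real k \<ge> \<bar>a2\<bar>" "real k \<ge> 8 * \<bar>z\<bar>" by auto
  have q1: "\<bar>a1 + k\<bar> \<le> 2 * (b1 + k)" using k1(1) b(1) by (simp add: abs_le_iff)
  have q2: "\<bar>a2 + k\<bar> \<le> 2 * (b2 + k)" using k1(2) b(2) by (simp add: abs_le_iff)
  have d: "b1 + k > 0" "b2 + k > 0" "real k + 1 > 0" using b by auto
  have "\<bar>(a1 + k) * (a2 + k) * z / ((b1 + k) * (b2 + k) * (real k + 1))\<bar>
      = (\<bar>a1 + k\<bar> * \<bar>a2 + k\<bar>) * \<bar>z\<bar> / ((b1 + k) * (b2 + k) * (real k + 1))"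
    using d by (simp add: abs_mult abs_divide)
  also have "\<dots> \<le> (2 * (b1 + k) * (2 * (b2 + k))) * \<bar>z\<bar> / ((b1 + k) * (b2 + k) * (real k + 1))"
    by (intro divide_right_mono mult_right_mono mult_mono q1 q2) (use d in auto)
  also have "\<dots> = 4 * \<bar>z\<bar> / (real k + 1)"
  proof -
    have nz: "b1 + real k \<noteq> 0" "b2 + real k \<noteq> 0" "real k + 1 \<noteq> 0" using d by auto
    show ?thesis using nz by (simp add: divide_simps) (simp add: algebra_simps)
  qed
  also have "\<dots> \<le> 1/2" using k1 d by (simp add: field_simps)
  finally have R: "\<bar>(a1 + k) * (a2 + k) * z / ((b1 + k) * (b2 + k) * (real k + 1))\<bar> \<le> 1/2" .
  have "norm (norm (hterm a1 a2 b1 b2 z (Suc k))) = \<bar>hterm a1 a2 b1 b2 z k\<bar> * \<bar>(a1 + k) * (a2 + k) * z / ((b1 + k) * (b2 + k) * (real k + 1))\<bar>"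
    unfolding hterm_Suc[OF b] real_norm_def abs_abs abs_mult[of "hterm a1 a2 b1 b2 z k"] by simp
  also have "\<dots> \<le> \<bar>hterm a1 a2 b1 b2 z k\<bar> * (1/2)"
    by (rule mult_left_mono[OF R]) simp
  finally show "norm (norm (hterm a1 a2 b1 b2 z (Suc k))) \<le> 1/2 * norm (norm (hterm a1 a2 b1 b2 z k))"
    by simp
qed simp


lemma exp_sums_real: "(\<lambda>l. (x::real)^l / fact l) sums exp x"
  using exp_converges[of x] by (simp add: real_scaleR_def divide_inverse mult.commute)

lemma gg_hterm: "gg k a1 a2 b1 b2 * t^(3*k) = hterm a1 a2 b1 b2 (t^3/27) k"
proof -
  have "t^(3*k) = (t^3)^k" by (simp add: power_mult)
  then show ?thesis unfolding gg_def hterm_def by (simp add: power_divide)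
qed

lemma hterm_sums: "b1 > 0 \<Longrightarrow> b2 > 0 \<Longrightarrow> (\<lambda>k. c * hterm a1 a2 b1 b2 z k) sums (c * hyp2F2 a1 a2 b1 b2 z)"
  unfolding hyp2F2_hterm
  by (intro sums_mult summable_sums summable_norm_cancel[OF hterm_abs_summable]) auto

lemma hterm_abs_sums: "b1 > 0 \<Longrightarrow> b2 > 0 \<Longrightarrow> (\<lambda>k. \<bar>c * hterm a1 a2 b1 b2 z k\<bar>) sums (\<bar>c\<bar> * (\<Sum>k. \<bar>hterm a1 a2 b1 b2 z k\<bar>))"
  unfolding abs_mult
  by (intro sums_mult summable_sums) (use hterm_abs_summable[of b1 b2 a1 a2 z] in auto)

abbreviation RHSser :: "nat \<Rightarrow> real \<Rightarrow> real" where
  "RHSser n \<tau> \<equiv> Gamma (real n / 3 + 1/6) / 3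
           * hyp2F2 (1/6 - real n / 3) (1/2 - real n / 3) (1/3) (2/3) (\<tau>^3 / 27)
       + \<tau> * Gamma (real n / 3 + 5/6) / 3
           * hyp2F2 (1/2 - real n / 3) (5/6 - real n / 3) (2/3) (4/3) (\<tau>^3 / 27)
       + (2 * real n - 1) * \<tau>^2 / 36 * Gamma (real n / 3 + 1/2)
           * hyp2F2 (5/6 - real n / 3) (7/6 - real n / 3) (4/3) (5/3) (\<tau>^3 / 27)"

lemma cc_terms:
  "cc n (3*k) * t^(3*k) = Gamma (real n / 3 + 1/6) / 3 * hterm (1/6 - real n / 3) (1/2 - real n / 3) (1/3) (2/3) (t^3/27) k"
  "cc n (3*k+1) * t^(3*k+1) = t * Gamma (real n / 3 + 5/6) / 3 * hterm (1/2 - real n / 3) (5/6 - real n / 3) (2/3) (4/3) (t^3/27) k"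
  "cc n (3*k+2) * t^(3*k+2) = (2 * real n - 1) * t^2 / 36 * Gamma (real n / 3 + 1/2) * hterm (5/6 - real n / 3) (7/6 - real n / 3) (4/3) (5/3) (t^3/27) k"
proof -
  show "cc n (3*k) * t^(3*k) = Gamma (real n / 3 + 1/6) / 3 * hterm (1/6 - real n / 3) (1/2 - real n / 3) (1/3) (2/3) (t^3/27) k"
    unfolding cc0 gg_hterm[symmetric] by simp
  show "cc n (3*k+1) * t^(3*k+1) = t * Gamma (real n / 3 + 5/6) / 3 * hterm (1/2 - real n / 3) (5/6 - real n / 3) (2/3) (4/3) (t^3/27) k"
    unfolding cc1 gg_hterm[symmetric] by (simp add: power_add)
  show "cc n (3*k+2) * t^(3*k+2) = (2 * real n - 1) * t^2 / 36 * Gamma (real n / 3 + 1/2) * hterm (5/6 - real n / 3) (7/6 - real n / 3) (4/3) (5/3) (t^3/27) k"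
    unfolding cc2 gg_hterm[symmetric] by (simp add: power_add power2_eq_square)
qed

lemma cc_sums: "(\<lambda>m. cc n m * t^m) sums RHSser n t"
  by (rule sums_split3) (unfold cc_terms, (rule hterm_sums; simp)+)

lemma cc_abs_summable: "summable (\<lambda>m. norm (cc n m * t^m))"
  unfolding real_norm_def
  by (rule sums_summable[OF sums_split3]) (unfold cc_terms, (rule hterm_abs_sums; simp)+)

lemma Ef_terms: "fps_nth Ef (3*l) * t^(3*l) = (- (t^3/27))^l / fact l"
proof -
  have pw: "t^(3*l) = (t^3)^l" by (simp add: power_mult)
  have e: "fps_nth Ef (3*l) = (-1/27)^l / fact l" by (simp add: Ef_def)
  have h: "- (t^3/27) = (-1/27) * t^3" by simp
  show ?thesis unfolding e pw h power_mult_distrib by simp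
qed

lemma Ef_sums: "(\<lambda>m. fps_nth Ef m * t^m) sums exp (- (t^3/27))"
proof (rule sums_reindex_mult[of 3 0])
  show "(\<lambda>l. fps_nth Ef (3 * l + 0) * t ^ (3 * l + 0)) sums exp (- (t ^ 3 / 27))"
    unfolding add_0_right Ef_terms by (rule exp_sums_real)
next
  fix m :: nat assume "m mod 3 \<noteq> 0"
  then have "\<not> 3 dvd m" by presburger
  then show "fps_nth Ef m * t ^ m = 0" by (simp add: Ef_def)
qed simp_all

lemma Ef_abs_summable: "summable (\<lambda>m. norm (fps_nth Ef m * t^m))"
proof -
  have "(\<lambda>m. \<bar>fps_nth Ef m * t^m\<bar>) sums exp (\<bar>t^3/27\<bar>)"
  proof (rule sums_reindex_mult[of 3 0])
    have "\<bar>(- (t ^ 3 / 27)) ^ l / fact l\<bar> = \<bar>t^3/27\<bar> ^ l / fact l" for l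
      by (simp add: abs_divide power_abs)
    then show "(\<lambda>l. \<bar>fps_nth Ef (3 * l + 0) * t ^ (3 * l + 0)\<bar>) sums exp (\<bar>t^3/27\<bar>)"
      unfolding add_0_right Ef_terms by (simp only:) (rule exp_sums_real)
  next
    fix m :: nat assume "m mod 3 \<noteq> 0"
    then have "\<not> 3 dvd m" by presburger
    then show "\<bar>fps_nth Ef m * t ^ m\<bar> = 0" by (simp add: Ef_def)
  qed simp_all
  then show ?thesis by (auto simp: sums_iff)
qed

lemma Psi_sums: "(\<lambda>p. fps_nth (Psi n) p * t^p) sums (RHSser n t * exp (- (t^3/27)))"
proof -
  have "(\<lambda>p. \<Sum>i\<le>p. (fps_nth Ef i * t^i) * (cc n (p - i) * t^(p - i))) sums ((\<Sum>m. fps_nth Ef m * t^m) * (\<Sum>m. cc n m * t^m))"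
    by (rule Cauchy_product_sums[OF Ef_abs_summable cc_abs_summable])
  moreover have "(\<Sum>i\<le>p. (fps_nth Ef i * t^i) * (cc n (p - i) * t^(p - i))) = fps_nth (Psi n) p * t^p" for p
  proof -
    have "(\<Sum>i\<le>p. (fps_nth Ef i * t^i) * (cc n (p - i) * t^(p - i))) = (\<Sum>i\<le>p. fps_nth Ef i * cc n (p - i) * t^p)"
    proof (rule sum.cong)
      fix i assume "i \<in> {..p}"
      then have "t^i * t^(p - i) = t^p" by (simp add: power_add[symmetric])
      then show "(fps_nth Ef i * t^i) * (cc n (p - i) * t^(p - i)) = fps_nth Ef i * cc n (p - i) * t^p"
        by (metis mult.assoc mult.left_commute)
    qed simp
    also have "\<dots> = fps_nth (Psi n) p * t^p"
      unfolding Psi_def fps_mult_nth Rf_def fps_nth_Abs_fps atLeast0AtMost sum_distrib_right ..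
    finally show ?thesis .
  qed
  ultimately show ?thesis using sums_unique[OF Ef_sums] sums_unique[OF cc_sums] by (simp add: mult.commute)
qed


definition Bc :: "real \<Rightarrow> nat \<Rightarrow> real" where
  "Bc x j = (if even j then (- (x^2/3))^(j div 2) / fact (j div 2) else 0)"
definition Bf :: "real \<Rightarrow> real fps" where "Bf x = Abs_fps (Bc x)"
definition Exf :: "real \<Rightarrow> real fps" where "Exf x = fps_exp (x^4) * Bf x"
definition ee :: "nat \<Rightarrow> real \<Rightarrow> real" where "ee p x = fps_nth (Exf x) p"

lemma Bf_deriv: "fps_deriv (Bf x) = fps_const (- (2 * x^2 / 3)) * (fps_X * Bf x)"
proof (rule fps_ext)
  fix m
  show "fps_nth (fps_deriv (Bf x)) m = fps_nth (fps_const (- (2 * x^2 / 3)) * (fps_X * Bf x)) m"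
  proof (cases "even m")
    case True
    then have o: "odd (Suc m)" by simp
    show ?thesis
    proof (cases m)
      case 0 then show ?thesis by (simp add: Bf_def Bc_def)
    next
      case (Suc q)
      then have "odd q" using True by simp
      then show ?thesis using o Suc by (simp add: Bf_def Bc_def)
    qed
  next
    case False
    then obtain k where k: "Suc m = 2 * Suc k" by (metis dvd_def even_Suc mult_0_right nat.distinct(1) not0_implies_Suc)
    then have m: "m = 2*k + 1" by simp
    have l: "fps_nth (fps_deriv (Bf x)) m = real (Suc m) * ((- (x^2/3))^(Suc k) / fact (Suc k))"
    proof -
      have d: "even (Suc m)" "Suc m div 2 = Suc k" unfolding k by simp_all
      show ?thesis unfolding fps_deriv_nth Bf_def Bc_def fps_nth_Abs_fps Suc_eq_plus1[symmetric] using d by (simp only: if_True)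
    qed
    have r: "fps_nth (fps_const (- (2 * x^2 / 3)) * (fps_X * Bf x)) m = - (2 * x^2 / 3) * ((- (x^2/3))^k / fact k)"
      using m by (simp add: Bf_def Bc_def)
    have p: "(fact k :: real) > 0" "(1::real) + real k > 0" by simp_all
    show ?thesis unfolding l r k using p by (simp add: field_simps del: of_nat_Suc) (simp add: algebra_simps)
  qed
qed

lemma Exf_deriv: "fps_deriv (Exf x) = fps_const (x^4) * Exf x + fps_const (- (2 * x^2 / 3)) * (fps_X * Exf x)"
  unfolding Exf_def fps_deriv_mult fps_exp_deriv Bf_deriv by (simp add: algebra_simps)

lemma ee_rec: "(real p + 1) * ee (Suc p) x = x^4 * ee p x - 2 * x^2 / 3 * (if p = 0 then 0 else ee (p - 1) x)"
proof -
  have e: "fps_nth (fps_deriv (Exf x)) p = fps_nth (fps_const (x^4) * Exf x + fps_const (- (2 * x^2 / 3)) * (fps_X * Exf x)) p"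
    by (simp only: Exf_deriv)
  have l: "fps_nth (fps_deriv (Exf x)) p = (real p + 1) * ee (Suc p) x" by (simp add: ee_def)
  have r: "fps_nth (fps_const (x^4) * Exf x + fps_const (- (2 * x^2 / 3)) * (fps_X * Exf x)) p
     = x^4 * ee p x + (- (2 * x^2 / 3)) * (if p = 0 then 0 else ee (p - 1) x)"
    by (simp only: fps_add_nth fps_mult_left_const_nth fps_X_mult_nth ee_def)
  show ?thesis using e unfolding l r by simp
qed

lemma ee_0: "ee 0 x = 1" by (simp add: ee_def Exf_def Bf_def Bc_def)

lemma ee_expand: "ee p x = (\<Sum>i\<le>p. (x^4)^i / fact i * Bc x (p - i))"
  unfolding ee_def Exf_def fps_mult_nth Bf_def fps_exp_def by (simp add: atLeast0AtMost)

lemma intg_even: "(\<lambda>x::real. x^(2*m) * exp (- (x^6))) integrable_on UNIV"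
  using gamma6[of 1 m] by auto

lemma intg_term: "(\<lambda>x::real. x^(2*n) * exp (- (x^6)) * ((x^4)^i / fact i * Bc x j)) integrable_on UNIV"
proof (cases "even j")
  case True
  then obtain l where j: "j = 2*l" by blast
  have "x^(2*n) * exp (- (x^6)) * ((x^4)^i / fact i * Bc x j) = ((-1/3)^l / fact l / fact i) * (x^(2*(n + 2*i + l)) * exp (- (x^6)))" for x
  proof -
    have xp: "x^(2*(n + 2*i + l)) = x^(2*n) * (x^4)^i * (x^2)^l"
      by (simp add: power_add algebra_simps flip: power_mult)
    have b: "Bc x j = (-1/3)^l * (x^2)^l / fact l"
      unfolding Bc_def j by (simp add: power_mult_distrib[symmetric])
    show ?thesis unfolding xp b by (simp add: field_simps)
  qed
  then have eq: "(\<lambda>x::real. x^(2*n) * exp (- (x^6)) * ((x^4)^i / fact i * Bc x j)) = (\<lambda>x. ((-1/3)^l / fact l / fact i) * (x^(2*(n + 2*i + l)) * exp (- (x^6))))"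
    by (rule ext)
  show ?thesis unfolding eq by (rule integrable_on_mult_right[OF intg_even])
next
  case False
  then show ?thesis by (simp add: Bc_def integrable_0)
qed

lemma intg_ee: "(\<lambda>x::real. x^(2*n) * exp (- (x^6)) * ee p x) integrable_on UNIV"
proof -
  have "(\<lambda>x. \<Sum>i\<le>p. x^(2*n) * exp (- (x^6)) * ((x^4)^i / fact i * Bc x (p - i))) integrable_on UNIV"
    by (intro integrable_sum intg_term) simp
  then show ?thesis unfolding ee_expand sum_distrib_left .
qed

definition dd :: "nat \<Rightarrow> nat \<Rightarrow> real" where
  "dd n p = integral UNIV (\<lambda>x::real. x^(2*n) * exp (- (x^6)) * ee p x)"
definition Phi :: "nat \<Rightarrow> real fps" where "Phi n = Abs_fps (dd n)"

lemma dd_rec: "(real m + 1) * dd n (Suc m) = dd (n+2) m - 2/3 * (if m = 0 then 0 else dd (n+1) (m - 1))"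
proof -
  have "(real m + 1) * dd n (Suc m) = integral UNIV (\<lambda>x::real. x^(2*n) * exp (- (x^6)) * ((real m + 1) * ee (Suc m) x))"
    unfolding dd_def by (subst integral_mult_right[symmetric]) (simp add: ac_simps)
  also have "\<dots> = integral UNIV (\<lambda>x::real. x^(2*(n+2)) * exp (- (x^6)) * ee m x - 2/3 * (if m = 0 then 0 else x^(2*(n+1)) * exp (- (x^6)) * ee (m - 1) x))"
  proof (rule integral_cong)
    fix x :: real
    have a: "2*(n+2) = 2*n + 4" "2*(n+1) = 2*n+2" by simp_all
    have p1: "x^(2*(n+2)) = x^(2*n) * x^4" "x^(2*(n+1)) = x^(2*n) * x^2" unfolding a by (simp_all only: power_add)
    show "x^(2*n) * exp (- (x^6)) * ((real m + 1) * ee (Suc m) x) = x^(2*(n+2)) * exp (- (x^6)) * ee m x - 2/3 * (if m = 0 then 0 else x^(2*(n+1)) * exp (- (x^6)) * ee (m - 1) x)"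
      unfolding ee_rec p1 by (cases m) (simp_all add: algebra_simps)
  qed
  also have "\<dots> = dd (n+2) m - 2/3 * (if m = 0 then 0 else dd (n+1) (m - 1))"
  proof (cases "m = 0")
    case True then show ?thesis by (simp add: dd_def)
  next
    case False
    then have mz: "(m = 0) = False" by simp
    have iA: "(\<lambda>x::real. x^(2*(n+2)) * exp (- (x^6)) * ee m x) integrable_on UNIV" by (rule intg_ee)
    have iB: "(\<lambda>x::real. 2/3 * (x^(2*(n+1)) * exp (- (x^6)) * ee (m - 1) x)) integrable_on UNIV"
      by (rule integrable_on_mult_right[OF intg_ee])
    have "integral UNIV (\<lambda>x::real. 2/3 * (x^(2*(n+1)) * exp (- (x^6)) * ee (m - 1) x)) = 2/3 * dd (n+1) (m - 1)"
      unfolding dd_def by (rule integral_mult_right)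
    then show ?thesis unfolding mz if_False using integral_diff[OF iA iB] by (simp add: dd_def)
  qed
  finally show ?thesis .
qed

lemma Phi_deriv: "fps_deriv (Phi n) = Phi (n+2) - fps_const (2/3) * (fps_X * Phi (n+1))"
proof (rule fps_ext)
  fix m
  have l: "fps_nth (fps_deriv (Phi n)) m = (real m + 1) * dd n (Suc m)" by (simp add: Phi_def)
  have r: "fps_nth (Phi (n+2) - fps_const (2/3) * (fps_X * Phi (n+1))) m
       = dd (n+2) m - 2/3 * (if m = 0 then 0 else dd (n+1) (m - 1))"
    by (simp add: Phi_def)
  show "fps_nth (fps_deriv (Phi n)) m = fps_nth (Phi (n+2) - fps_const (2/3) * (fps_X * Phi (n+1))) m"
    unfolding l r by (rule dd_rec)
qed

lemma dd_0: "dd n 0 = Gamma ((2*real n + 1)/6) / 3"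
  unfolding dd_def ee_0 using gamma6[of 1 n] by (simp add: integral_unique)

lemma Psi_0: "fps_nth (Psi n) 0 = Gamma ((2*real n + 1)/6) / 3"
proof -
  have "fps_nth (Psi n) 0 = cc n 0" by (simp add: Psi_def Ef_def Rf_def)
  also have "\<dots> = Gamma (real n / 3 + 1/6) / 3" using cc0[of n 0] by simp
  also have "real n / 3 + 1/6 = (2*real n + 1)/6" by (simp add: field_simps)
  finally show ?thesis .
qed

lemma Phi_Psi: "Phi n = Psi n"
  by (rule fps_family_unique[OF Phi_deriv Psi_deriv]) (simp add: Phi_def dd_0 Psi_0)


lemma poly_bound:
  fixes y T :: real assumes y: "y \<ge> 0" and T: "T \<ge> 0"
  shows "T * y^2 + T^2 * y / 3 \<le> y^3 / 2 + 18 * T^3"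
proof (cases "y \<le> 4 * T")
  case True
  have "y^2 \<le> (4*T)^2" using True y by (intro power_mono) auto
  then have a: "T * y^2 \<le> T * (16 * T^2)" using T by (intro mult_left_mono) (auto simp: power_mult_distrib)
  have b: "T^2 * y \<le> T^2 * (4*T)" using True by (intro mult_left_mono) auto
  have c: "y^3 \<ge> 0" using y by simp
  have e: "T * (16 * T^2) = 16 * T^3" "T^2 * (4*T) = 4 * T^3" by (simp_all add: power2_eq_square power3_eq_cube)
  have d: "T^3 \<ge> 0" using T by simp
  show ?thesis using a b c d unfolding e by linarith
next
  case False
  then have yT: "4 * T \<le> y" by simp
  have a: "T * y^2 \<le> (y/4) * y^2" using yT by (intro mult_right_mono) auto
  have "T^2 \<le> (y/4)^2" using yT T by (intro power_mono) auto
  then have b: "T^2 * y \<le> (y/4)^2 * y" using y by (intro mult_right_mono) auto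
  have c: "T^3 \<ge> 0" using T by simp
  have d: "y^3 \<ge> 0" using y by simp
  have e: "(y/4) * y^2 = y^3 / 4" "(y/4)^2 * y = y^3 / 16" by (simp_all add: power2_eq_square power3_eq_cube)
  show ?thesis using a b c d unfolding e by linarith
qed

lemma exp_bound:
  fixes x t :: real
  shows "exp (- (x^6)) * (exp (\<bar>t\<bar> * x^4) * exp (t^2 * x^2 / 3)) \<le> exp (18 * \<bar>t\<bar>^3) * exp (- (1/2) * x^6)"
proof -
  have "\<bar>t\<bar> * (x^2)^2 + \<bar>t\<bar>^2 * x^2 / 3 \<le> (x^2)^3 / 2 + 18 * \<bar>t\<bar>^3"
    by (rule poly_bound) auto
  then have "- (x^6) + (\<bar>t\<bar> * x^4 + t^2 * x^2 / 3) \<le> 18 * \<bar>t\<bar>^3 + (- (1/2) * x^6)"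
    by (simp add: power_mult[symmetric] power2_abs)
  then have i: "exp (- (x^6) + (\<bar>t\<bar> * x^4 + t^2 * x^2 / 3)) \<le> exp (18 * \<bar>t\<bar>^3 + (- (1/2) * x^6))"
    by (simp only: exp_le_cancel_iff)
  have e1: "exp (- (x^6)) * (exp (\<bar>t\<bar> * x^4) * exp (t^2 * x^2 / 3)) = exp (- (x^6) + (\<bar>t\<bar> * x^4 + t^2 * x^2 / 3))"
    by (simp only: exp_add)
  have e2: "exp (18 * \<bar>t\<bar>^3) * exp (- (1/2) * x^6) = exp (18 * \<bar>t\<bar>^3 + (- (1/2) * x^6))"
    by (simp only: exp_add)
  show ?thesis unfolding e1 e2 by (rule i)
qed

lemma a_sums:
  fixes x t :: real
  shows "(\<lambda>i. (x^4)^i / fact i * t^i) sums exp (t * x^4)"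
proof -
  have "(x^4)^i / fact i * t^i = (t * x^4)^i / fact i" for i :: nat by (simp add: power_mult_distrib field_simps)
  then show ?thesis using exp_sums_real[of "t * x^4"] by simp
qed

lemma a_abs_sums:
  fixes x t :: real
  shows "(\<lambda>i. \<bar>(x^4)^i / fact i * t^i\<bar>) sums exp (\<bar>t\<bar> * x^4)"
proof -
  have x4: "\<bar>x^4\<bar> = x^4" by simp
  have "\<bar>(x^4)^i / fact i * t^i\<bar> = (\<bar>t\<bar> * x^4)^i / fact i" for i :: nat
    by (simp add: power_mult_distrib abs_mult power_abs abs_divide x4 field_simps)
  then show ?thesis using exp_sums_real[of "\<bar>t\<bar> * x^4"] by simp
qed

lemma b_sums:
  fixes x t :: real
  shows "(\<lambda>j. Bc x j * t^j) sums exp (- (t^2 * x^2 / 3))"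
proof (rule sums_reindex_mult[of 2 0])
  have "Bc x (2 * l + 0) * t ^ (2 * l + 0) = (- (t^2 * x^2 / 3))^l / fact l" for l
  proof -
    have "t^(2*l) = (t^2)^l" by (simp add: power_mult)
    moreover have "- (t^2 * x^2 / 3) = t^2 * (- (x^2/3))" by simp
    ultimately show ?thesis unfolding Bc_def by (simp only: power_mult_distrib) simp
  qed
  then show "(\<lambda>l. Bc x (2 * l + 0) * t ^ (2 * l + 0)) sums exp (- (t^2 * x^2 / 3))"
    using exp_sums_real[of "- (t^2 * x^2 / 3)"] by simp
next
  fix m :: nat assume "m mod 2 \<noteq> 0"
  then have "odd m" by presburger
  then show "Bc x m * t^m = 0" by (simp add: Bc_def)
qed simp_all

lemma b_abs_sums:
  fixes x t :: real
  shows "(\<lambda>j. \<bar>Bc x j * t^j\<bar>) sums exp (t^2 * x^2 / 3)"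
proof (rule sums_reindex_mult[of 2 0])
  have "\<bar>Bc x (2 * l + 0) * t ^ (2 * l + 0)\<bar> = (t^2 * x^2 / 3)^l / fact l" for l
  proof -
    have "t^(2*l) = (t^2)^l" by (simp add: power_mult)
    moreover have "\<bar>- (x^2/3)\<bar> = x^2/3" by simp
    moreover have "(t^2 * x^2 / 3)^l = (t^2)^l * (x^2/3)^l"
      by (metis power_mult_distrib times_divide_eq_right)
    ultimately show ?thesis unfolding Bc_def
      by (simp add: abs_mult abs_divide power_abs)
  qed
  then show "(\<lambda>l. \<bar>Bc x (2 * l + 0) * t ^ (2 * l + 0)\<bar>) sums exp (t^2 * x^2 / 3)"
    using exp_sums_real[of "t^2 * x^2 / 3"] by simp
next
  fix m :: nat assume "m mod 2 \<noteq> 0"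
  then have "odd m" by presburger
  then show "\<bar>Bc x m * t^m\<bar> = 0" by (simp add: Bc_def)
qed simp_all

lemma ee_cauchy:
  fixes x t :: real
  shows "ee p x * t^p = (\<Sum>i\<le>p. ((x^4)^i / fact i * t^i) * (Bc x (p - i) * t^(p - i)))"
proof -
  have "ee p x * t^p = (\<Sum>i\<le>p. (x^4)^i / fact i * Bc x (p - i) * t^p)"
    unfolding ee_expand sum_distrib_right ..
  also have "\<dots> = (\<Sum>i\<le>p. ((x^4)^i / fact i * t^i) * (Bc x (p - i) * t^(p - i)))"
  proof (rule sum.cong)
    fix i assume "i \<in> {..p}"
    then have "t^p = t^i * t^(p - i)" by (simp add: power_add[symmetric])
    then show "(x^4)^i / fact i * Bc x (p - i) * t^p = ((x^4)^i / fact i * t^i) * (Bc x (p - i) * t^(p - i))"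
      by (simp add: ac_simps)
  qed simp
  finally show ?thesis .
qed

lemma ee_series:
  fixes x t :: real
  shows "(\<lambda>p. ee p x * t^p) sums (exp (t * x^4) * exp (- (t^2 * x^2 / 3)))"
proof -
  have "(\<lambda>p. \<Sum>i\<le>p. ((x^4)^i / fact i * t^i) * (Bc x (p - i) * t^(p - i))) sums
        ((\<Sum>i. (x^4)^i / fact i * t^i) * (\<Sum>j. Bc x j * t^j))"
    by (rule Cauchy_product_sums) (use a_abs_sums[of x t] b_abs_sums[of x t] in \<open>auto simp: sums_iff\<close>)
  moreover have "(\<Sum>i. (x^4)^i / fact i * t^i) = exp (t * x^4)" by (rule sums_unique[OF a_sums, symmetric])
  moreover have "(\<Sum>j. Bc x j * t^j) = exp (- (t^2 * x^2 / 3))" by (rule sums_unique[OF b_sums, symmetric])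
  ultimately show ?thesis unfolding ee_cauchy[symmetric] by simp
qed

lemma ee_partial_bound:
  fixes x t :: real
  shows "\<bar>\<Sum>p<N. ee p x * t^p\<bar> \<le> exp (\<bar>t\<bar> * x^4) * exp (t^2 * x^2 / 3)"
proof -
  define c where "c = (\<lambda>p. \<Sum>i\<le>p. \<bar>(x^4)^i / fact i * t^i\<bar> * \<bar>Bc x (p - i) * t^(p - i)\<bar>)"
  have cs: "c sums ((\<Sum>i. \<bar>(x^4)^i / fact i * t^i\<bar>) * (\<Sum>j. \<bar>Bc x j * t^j\<bar>))"
    unfolding c_def
    by (rule Cauchy_product_sums) (use a_abs_sums[of x t] b_abs_sums[of x t] in \<open>auto simp: sums_iff\<close>)
  have "\<bar>\<Sum>p<N. ee p x * t^p\<bar> \<le> (\<Sum>p<N. \<bar>ee p x * t^p\<bar>)" by (rule sum_abs)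
  also have "\<dots> \<le> (\<Sum>p<N. c p)"
  proof (rule sum_mono)
    fix p
    show "\<bar>ee p x * t^p\<bar> \<le> c p" unfolding ee_cauchy c_def
      by (rule order_trans[OF sum_abs]) (simp add: abs_mult)
  qed
  also have "\<dots> \<le> suminf c"
    by (rule sum_le_suminf) (use cs in \<open>auto simp: sums_iff c_def intro!: sum_nonneg\<close>)
  also have "\<dots> = exp (\<bar>t\<bar> * x^4) * exp (t^2 * x^2 / 3)"
  proof -
    have "(\<Sum>i. \<bar>(x^4)^i / fact i * t^i\<bar>) = exp (\<bar>t\<bar> * x^4)" by (rule sums_unique[OF a_abs_sums, symmetric])
    moreover have "(\<Sum>j. \<bar>Bc x j * t^j\<bar>) = exp (t^2 * x^2 / 3)" by (rule sums_unique[OF b_abs_sums, symmetric])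
    ultimately show ?thesis using sums_unique[OF cs] by simp
  qed
  finally show ?thesis .
qed

lemma lhs_sums:
  fixes t :: real and n :: nat
  defines "G \<equiv> (\<lambda>x::real. x ^ (2*n) * exp (- (x^6 - t * x^4 + t^2 * x^2 / 3)))"
  shows "G integrable_on UNIV" "(\<lambda>p. dd n p * t^p) sums integral UNIV G"
proof -
  define f where "f = (\<lambda>k x::real. \<Sum>p<k. x^(2*n) * exp (- (x^6)) * ee p x * t^p)"
  define h where "h = (\<lambda>x::real. exp (18 * \<bar>t\<bar>^3) * (x^(2*n) * exp (- (1/2) * x^6)))"
  have fi: "f k integrable_on UNIV" for k
    unfolding f_def by (intro integrable_sum integrable_on_mult_left intg_ee) simp
  have hi: "h integrable_on UNIV"
    unfolding h_def using gamma6[of "1/2" n] by (intro integrable_on_mult_right) auto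
  have le: "norm (f k x) \<le> h x" for k x
  proof -
    have "f k x = x^(2*n) * exp (- (x^6)) * (\<Sum>p<k. ee p x * t^p)"
      unfolding f_def sum_distrib_left by (simp add: ac_simps)
    then have "norm (f k x) = x^(2*n) * exp (- (x^6)) * \<bar>\<Sum>p<k. ee p x * t^p\<bar>"
      by (simp add: abs_mult)
    also have "\<dots> \<le> x^(2*n) * exp (- (x^6)) * (exp (\<bar>t\<bar> * x^4) * exp (t^2 * x^2 / 3))"
      by (intro mult_left_mono ee_partial_bound) simp
    also have "\<dots> = x^(2*n) * (exp (- (x^6)) * (exp (\<bar>t\<bar> * x^4) * exp (t^2 * x^2 / 3)))"
      by (simp add: ac_simps)
    also have "\<dots> \<le> x^(2*n) * (exp (18 * \<bar>t\<bar>^3) * exp (- (1/2) * x^6))"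
      by (intro mult_left_mono exp_bound) simp
    also have "\<dots> = h x" unfolding h_def by (simp add: ac_simps)
    finally show ?thesis .
  qed
  have conv: "(\<lambda>k. f k x) \<longlonglongrightarrow> G x" for x
  proof -
    have "(\<lambda>k. \<Sum>p<k. ee p x * t^p) \<longlonglongrightarrow> exp (t * x^4) * exp (- (t^2 * x^2 / 3))"
      using ee_series[of x t] by (simp add: sums_def)
    then have "(\<lambda>k. x^(2*n) * exp (- (x^6)) * (\<Sum>p<k. ee p x * t^p)) \<longlonglongrightarrow> x^(2*n) * exp (- (x^6)) * (exp (t * x^4) * exp (- (t^2 * x^2 / 3)))"
      by (intro tendsto_mult tendsto_const)
    moreover have "x^(2*n) * exp (- (x^6)) * (exp (t * x^4) * exp (- (t^2 * x^2 / 3))) = G x"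
    proof -
      have "exp (- (x^6)) * (exp (t * x^4) * exp (- (t^2 * x^2 / 3))) = exp (- (x^6 - t * x^4 + t^2 * x^2 / 3))"
        by (simp add: exp_add[symmetric] exp_diff exp_minus field_simps)
      then show ?thesis unfolding G_def by (simp add: ac_simps)
    qed
    moreover have "f k x = x^(2*n) * exp (- (x^6)) * (\<Sum>p<k. ee p x * t^p)" for k
      unfolding f_def sum_distrib_left by (simp add: ac_simps)
    ultimately show ?thesis by simp
  qed
  note dc = dominated_convergence[where f=f and h=h and g=G and S=UNIV, OF fi hi le conv]
  show "G integrable_on UNIV" by (rule dc(1))
  have "integral UNIV (f k) = (\<Sum>p<k. dd n p * t^p)" for k
    unfolding f_def dd_def
    by (subst integral_sum) (auto intro: integrable_on_mult_left intg_ee)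
  then show "(\<lambda>p. dd n p * t^p) sums integral UNIV G"
    using dc(2) by (simp add: sums_def)
qed

theorem lemma6p9:
  fixes \<tau> :: real and n :: nat
  shows "((\<lambda>x::real. x ^ (2*n) * exp (- (x^6 - \<tau> * x^4 + \<tau>^2 * x^2 / 3))) has_integral
     ( ( Gamma (real n / 3 + 1/6) / 3
           * hyp2F2 (1/6 - real n / 3) (1/2 - real n / 3) (1/3) (2/3) (\<tau>^3 / 27)
       + \<tau> * Gamma (real n / 3 + 5/6) / 3
           * hyp2F2 (1/2 - real n / 3) (5/6 - real n / 3) (2/3) (4/3) (\<tau>^3 / 27)
       + (2 * real n - 1) * \<tau>^2 / 36 * Gamma (real n / 3 + 1/2)
           * hyp2F2 (5/6 - real n / 3) (7/6 - real n / 3) (4/3) (5/3) (\<tau>^3 / 27) )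
       * exp (- (\<tau>^3 / 27)) )) UNIV"
  proof -
  define G where "G = (\<lambda>x::real. x ^ (2*n) * exp (- (x^6 - \<tau> * x^4 + \<tau>^2 * x^2 / 3)))"
  have gi: "G integrable_on UNIV" and gs: "(\<lambda>p. dd n p * \<tau>^p) sums integral UNIV G"
    using lhs_sums[of n \<tau>] unfolding G_def by auto
  have "dd n p = fps_nth (Psi n) p" for p
    using Phi_Psi[of n] by (metis Phi_def fps_nth_Abs_fps)
  then have "(\<lambda>p. dd n p * \<tau>^p) sums (RHSser n \<tau> * exp (- (\<tau>^3/27)))"
    using Psi_sums[of n \<tau>] by simp
  then have "integral UNIV G = RHSser n \<tau> * exp (- (\<tau>^3/27))"
    using gs sums_unique2 by blast
  then show ?thesis using integrable_integral[OF gi] unfolding G_def by simp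
qed

end
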